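(* Let $(\mathcal M,\mathrm d_{\mathcal M})$ be a metric space, $k\ge1$, and $Y=y_1,\dots,y_{k+1}\in\mathcal M^{k+1}$. Let $D=\min_{1\le i\le k}\mathrm d_{\mathcal M}(y_i,y_{i+1})$, let $i^*\in\{1,\dots,k\}$ be an index with $\mathrm d_{\mathcal M}(y_{i^*},y_{i^*+1})=D$, and let $Y'\in\mathcal M^k$ be the curve obtained from $Y$ by deleting $y_{i^*}$. Then $\mathrm d_{dF}(Y,Y')\le D$, and $Y'$ is a $2$-approximate $k$-simplification of $Y$.
   Context: A curve of complexity $m$ in a metric space $(\mathcal M,\mathrm d_{\mathcal M})$ is a sequence $p=p_1,\dots,p_m$ of points of $\mathcal M$; $\mathcal M^m$ denotes the set of such curves. For $p\in\mathcal M^m$ and $q\in\mathcal M^k$, a traversal of $p$ and $q$ is a sequence of index pairs $(i_1,j_1),\dots,(i_t,j_t)$ with $(i_1,j_1)=(1,1)$, $(i_t,j_t)=(m,k)$, and for every $u<t$: $i_{u+1}-i_u\in\{0,1\}$, $j_{u+1}-j_u\in\{0,1\}$ and $(i_{u+1}-i_u)+(j_{u+1}-j_u)\ge 1$. Its cost is $\max_u \mathrm d_{\mathcal M}(p_{i_u},q_{j_u})$. The discrete Fréchet distance $\mathrm d_{dF}(p,q)$ is the minimum cost over all traversals of $p$ and $q$. For $p\in\mathcal M^m$ and $\alpha\ge 1$, a curve $p'\in\mathcal M^k$ is an $\alpha$-approximate $k$-simplification of $p$ if $\mathrm d_{dF}(p,p')\le\alpha\,\mathrm d_{dF}(p,q)$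 for every $q\in\mathcal M^k$. *)

theory Defs
  imports Main "HOL.Real_Vector_Spaces"
begin

text \<open>Curves in a metric space are nonempty lists of points; positions are 0-based
  (list position i corresponds to the paper's index i+1).\<close>

definition traversal :: "nat \<Rightarrow> nat \<Rightarrow> (nat \<times> nat) list \<Rightarrow> bool" where
  "traversal m k T \<longleftrightarrow>
     T \<noteq> [] \<and> hd T = (0, 0) \<and> last T = (m - 1, k - 1) \<and>
     (\<forall>u. Suc u < length T \<longrightarrow>
        fst (T ! u) \<le> fst (T ! Suc u) \<and> fst (T ! Suc u) \<le> fst (T ! u) + 1 \<and>
        snd (T ! u) \<le> snd (T ! Suc u) \<and> snd (T ! Suc u) \<le> snd (T ! u) + 1 \<and>
        T ! u \<noteq> T ! Suc u)"

definition traversal_cost :: "'a::metric_space list \<Rightarrow> 'a list \<Rightarrow> (nat \<times> nat) list \<Rightarrow> real" where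
  "traversal_cost p q T = Max {dist (p ! fst (T ! u)) (q ! snd (T ! u)) | u. u < length T}"

definition dfrechet :: "'a::metric_space list \<Rightarrow> 'a list \<Rightarrow> real" where
  "dfrechet p q = Inf {traversal_cost p q T | T. traversal (length p) (length q) T}"

definition approx_simplification ::
    "real \<Rightarrow> nat \<Rightarrow> 'a::metric_space list \<Rightarrow> 'a list \<Rightarrow> bool" where
  "approx_simplification \<alpha> k p p' \<longleftrightarrow>
     length p' = k \<and>
     (\<forall>q::'a list. length q = k \<longrightarrow> dfrechet p p' \<le> \<alpha> * dfrechet p q)"

end

theory Submission
  imports Defs
begin

lemma cost_set_eq: "{dist (p ! fst (T ! u)) (q ! snd (T ! u)) | u. u < length T}
   = (\<lambda>u. dist (p ! fst (T ! u)) (q ! snd (T ! u))) ` {..<length T}"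
  by auto

lemma cost_ge:
  assumes "u < length T"
  shows "dist (p ! fst (T ! u)) (q ! snd (T ! u)) \<le> traversal_cost p q T"
  unfolding traversal_cost_def cost_set_eq
  using assms by (intro Max_ge) auto

lemma cost_le:
  assumes "T \<noteq> []" "\<And>u. u < length T \<Longrightarrow> dist (p ! fst (T ! u)) (q ! snd (T ! u)) \<le> c"
  shows "traversal_cost p q T \<le> c"
  unfolding traversal_cost_def cost_set_eq
  using assms by (subst Max_le_iff) auto

lemma cost_nonneg:
  assumes "T \<noteq> []" shows "0 \<le> traversal_cost p q T"
proof -
  have "0 \<le> dist (p ! fst (T ! 0)) (q ! snd (T ! 0))" by simp
  also have "\<dots> \<le> traversal_cost p q T" using assms by (intro cost_ge) auto
  finally show ?thesis .
qed

lemma trav_exists: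
  assumes "m \<ge> 1" "n \<ge> 1"
  shows "traversal m n (map (\<lambda>t. (min t (m-1), t-(m-1))) [0..<m+n-1])"
  using assms unfolding traversal_def
  by (auto simp: hd_map last_map hd_upt)

lemma bdd: "bdd_below {traversal_cost p q T | T. traversal m n T}"
  unfolding bdd_below_def traversal_def using cost_nonneg by blast

lemma fst_mono:
  assumes "traversal m n T" "v < length T" "u \<le> v"
  shows "fst (T ! u) \<le> fst (T ! v)"
  using assms(2,3)
proof (induction v)
  case 0 then show ?case by simp
next
  case (Suc v)
  show ?case
  proof (cases "u = Suc v")
    case False
    then have "fst (T ! u) \<le> fst (T ! v)" using Suc by auto
    also have "\<dots> \<le> fst (T ! Suc v)" using assms(1) Suc.prems unfolding traversal_def by blast
    finally show ?thesis .
  qed simp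
qed

lemma fst_bound:
  assumes "traversal m n T" "u < length T"
  shows "fst (T ! u) \<le> m - 1"
proof -
  have "fst (T ! u) \<le> fst (T ! (length T - 1))" using assms by (intro fst_mono) auto
  also have "T ! (length T - 1) = last T" using assms unfolding traversal_def by (auto simp: last_conv_nth)
  finally show ?thesis using assms unfolding traversal_def by simp
qed

lemma pigeon:
  assumes "traversal (Suc n) n T" "n \<ge> 1"
  shows "\<exists>u. Suc u < length T \<and> fst (T ! Suc u) = fst (T ! u) + 1 \<and> snd (T ! Suc u) = snd (T ! u)"
proof (rule ccontr)
  assume H: "\<not> ?thesis"
  have "\<forall>u. u < length T \<longrightarrow> fst (T ! u) \<le> snd (T ! u)"
  proof (intro allI)
    fix u show "u < length T \<longrightarrow> fst (T ! u) \<le> snd (T ! u)"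
    proof (induction u)
      case 0 then show ?case using assms unfolding traversal_def by (simp add: hd_conv_nth[symmetric])
    next
      case (Suc u)
      show ?case
      proof
        assume u: "Suc u < length T"
        have st: "fst (T ! u) \<le> fst (T ! Suc u) \<and> fst (T ! Suc u) \<le> fst (T ! u) + 1 \<and>
        snd (T ! u) \<le> snd (T ! Suc u) \<and> snd (T ! Suc u) \<le> snd (T ! u) + 1"
          using assms u unfolding traversal_def by blast
        have "fst (T ! u) \<le> snd (T ! u)" using Suc u by simp
        then show "fst (T ! Suc u) \<le> snd (T ! Suc u)" using st H u by force
      qed
    qed
  qed
  moreover have Tne: "T \<noteq> []" using assms unfolding traversal_def by simp
  ultimately have "fst (T ! (length T - 1)) \<le> snd (T ! (length T - 1))" by simp
  then have "fst (last T) \<le> snd (last T)" using Tne by (simp add: last_conv_nth)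
  then show False using assms unfolding traversal_def by simp
qed

theorem mainTheorem9:
  fixes Y :: "'a::metric_space list" and k istar :: nat and D :: real
  assumes "k \<ge> 1"
    and "length Y = k + 1"
    and "D = Min {dist (Y ! i) (Y ! (i + 1)) | i. i < k}"
    and "istar < k"
    and "dist (Y ! istar) (Y ! (istar + 1)) = D"
  shows "dfrechet Y (take istar Y @ drop (Suc istar) Y) \<le> D \<and>
         approx_simplification 2 k Y (take istar Y @ drop (Suc istar) Y)"
proof -
  define Y' where "Y' = take istar Y @ drop (Suc istar) Y"
  have lY': "length Y' = k" using assms unfolding Y'_def by simp
  have nth1: "Y' ! j = Y ! j" if "j < istar" for j
    using that assms unfolding Y'_def by (simp add: nth_append)
  have nth2: "Y' ! j = Y ! Suc j" if "istar \<le> j" "j < k" for j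
    using that assms unfolding Y'_def by (simp add: nth_append min_def)
  define T where "T = map (\<lambda>i. (i, if i \<le> istar then i else i - 1)) [0..<k+1]"
  have Tn: "T ! u = (u, if u \<le> istar then u else u - 1)" if "u < k + 1" for u
    using that unfolding T_def by (simp del: upt_Suc)
  have lT: "length T = k + 1" unfolding T_def by simp
  have Tne: "T \<noteq> []" using lT by auto
  have hT: "hd T = (0,0)" using Tn[of 0] Tne by (simp add: hd_conv_nth)
  have laT: "last T = (k, k - 1)" using Tn[of k] lT Tne assms(4) by (simp add: last_conv_nth)
  have trT: "traversal (length Y) (length Y') T"
    unfolding traversal_def using assms lY' lT hT laT Tn by auto
  have D0: "0 \<le> D" using assms(5) by (metis zero_le_dist)
  have cT: "traversal_cost Y Y' T \<le> D"
  proof (rule cost_le)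
    show "T \<noteq> []" unfolding T_def by simp
    fix u assume u: "u < length T"
    then have u': "u < k + 1" using lT by simp
    show "dist (Y ! fst (T ! u)) (Y' ! snd (T ! u)) \<le> D"
    proof (cases "u < istar")
      case True then show ?thesis using u' nth1 D0 Tn[OF u'] by simp
    next
      case False
      show ?thesis
      proof (cases "u = istar")
        case True then show ?thesis using u' nth2 assms Tn[OF u'] by simp
      next
        case False
        with \<open>\<not> u < istar\<close> have "istar \<le> u - 1" "u - 1 < k" "Suc (u-1) = u" using u' by auto
        then show ?thesis using u' nth2[of "u-1"] D0 False \<open>\<not> u < istar\<close> Tn[OF u'] by simp
      qed
    qed
  qed
  have part1: "dfrechet Y Y' \<le> D"
    unfolding dfrechet_def
    apply (rule cInf_lower2[where x="traversal_cost Y Y' T"])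
    using trT cT bdd by auto
  have part2: "dfrechet Y Y' \<le> 2 * dfrechet Y q" if lq: "length q = k" for q :: "'a list"
  proof -
    have fin: "finite {dist (Y ! i) (Y ! (i + 1)) | i. i < k}" by simp
    have "D \<le> 2 * traversal_cost Y q T'" if tr: "traversal (length Y) (length q) T'" for T'
    proof -
      have tr': "traversal (Suc k) k T'" using tr lq assms by simp
      obtain u where u: "Suc u < length T'" "fst (T' ! Suc u) = fst (T' ! u) + 1"
        "snd (T' ! Suc u) = snd (T' ! u)" using pigeon[OF tr' assms(1)] by blast
      define i where "i = fst (T' ! u)"
      define j where "j = snd (T' ! u)"
      have ik: "i < k" using fst_bound[OF tr' u(1)] u(2) unfolding i_def by simp
      have "D \<le> dist (Y ! i) (Y ! (i + 1))" unfolding assms(3)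
        using ik fin by (intro Min_le) auto
      also have "\<dots> \<le> dist (Y ! i) (q ! j) + dist (Y ! (i+1)) (q ! j)"
        by (metis dist_commute dist_triangle)
      also have "dist (Y ! i) (q ! j) \<le> traversal_cost Y q T'"
        using cost_ge[of u T' Y q] u(1) unfolding i_def j_def by simp
      also have "dist (Y ! (i+1)) (q ! j) \<le> traversal_cost Y q T'"
        using cost_ge[of "Suc u" T' Y q] u unfolding i_def j_def by simp
      finally show ?thesis by simp
    qed
    then have "D \<le> dfrechet Y q" if False using that by simp
    have ne: "{traversal_cost Y q T | T. traversal (length Y) (length q) T} \<noteq> {}"
      using trav_exists[of "length Y" "length q"] assms lq by auto
    have "D / 2 \<le> dfrechet Y q" unfolding dfrechet_def
      using \<open>\<And>T'. traversal (length Y) (length q) T' \<Longrightarrow> D \<le> 2 * traversal_cost Y q T'\<close>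
      by (intro cInf_greatest[OF ne]) force
    then show ?thesis using part1 by simp
  qed
  show ?thesis using part1 part2 lY' unfolding Y'_def approx_simplification_def by auto
qed

end
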